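(* The set consisting of the 1-in-3 gadget, the free terminal, and fanout gates parsimoniously simulates the NOR gate (via a planar simulation).
   Context: A gadget consists of a finite set of ports, equipped with a cyclic order, and a constraint, which is a set of subsets of the ports. A network of gadgets from $S$ is a finite undirected multigraph whose vertices are labeled by gadgets from $S$, each vertex's edge incidences being in bijection with the ports of its label. An assignment orients every edge; a vertex is satisfied if the set of its ports whose edges point into it belongs to its constraint. A simulation using gadgets from $S$ is a network of gadgets from $S$ that may additionally have dangling edges, each incident to only one vertex (equivalently, an extra outside-world vertex whose constraint contains every subset). It is planar if the graph including the outside world has a planar embedding respecting the port cyclic orders; the simulated gadget's ports are then the dangling edges in their order around the simulation. The simulated gadget's constraint consists of each set $D$ of dangling edges such that some assignment satisfying every non-outside-world vertex makes exactly the dangling edges in $D$ point into the simulation. A simulation is parsimonious if for each set in the simulated gadget's constraint there is exactly one such satisfying assignment realizing it; $S$ parsimoniously simulates $G$ if some parsimonious simulation using gadgets from $S$ has simulated gadget $G$. Gadgets: 1-in-3 gadget: ports $a,b,c$, constraint $\{\{a\},\{b\},\{c\}\}$. Free terminal: one port $a$, constraint $\{\emptyset,\{a\}\}$. $k$-way fanout gate: ports $a,c_1,\dots,c_k$, constraint $\{\{a\},\{c_1,\dots,c_k\}\}$. NOR gate: ports $a,b,c$, constraint $\{\emptyset,\{a,c\},\{b,c\},\{a,b,c\}\}$. *)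

theory Defs
  imports Main
begin

text \<open>A gadget is a pair (n, C): its ports are 0, ..., n-1 in the cyclic order
  0 -> 1 -> ... -> n-1 -> 0, and its constraint C is a set of subsets of the ports.\<close>

type_synonym gadget = "nat \<times> nat set set"

definition one_in_three :: gadget where
  "one_in_three = (3, {{0}, {1}, {2}})"

definition free_terminal :: gadget where
  "free_terminal = (1, {{}, {0}})"

definition fanout :: "nat \<Rightarrow> gadget" where
  "fanout k = (k + 1, {{0}, {1..k}})"              \<comment> \<open>ports a=0, c_j=j\<close>

definition nor_gate :: gadget where
  "nor_gate = (3, {{}, {0, 2}, {1, 2}, {0, 1, 2}})" \<comment> \<open>ports a=0, b=1, c=2\<close>

definition orbit :: "('a \<Rightarrow> 'a) \<Rightarrow> 'a \<Rightarrow> 'a set" where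
  "orbit f x = {(f ^^ k) x | k. True}"

definition map_component :: "'a set \<Rightarrow> ('a \<Rightarrow> 'a) \<Rightarrow> ('a \<Rightarrow> 'a) \<Rightarrow> 'a \<Rightarrow> 'a set" where
  "map_component D \<sigma> \<alpha> x =
     {y. (x, y) \<in> ({(u, \<sigma> u) | u. u \<in> D} \<union> {(u, \<alpha> u) | u. u \<in> D})\<^sup>*}"

text \<open>Darts D, rotation \<sigma> (vertices = \<sigma>-orbits), edge involution \<alpha>
  (edges = \<alpha>-orbits), faces = orbits of \<sigma> \<circ> \<alpha>. The map is planar (genus 0)
  iff Euler's formula V - E + F = 2 holds on every connected component.\<close>

definition planar_map :: "'a set \<Rightarrow> ('a \<Rightarrow> 'a) \<Rightarrow> ('a \<Rightarrow> 'a) \<Rightarrow> bool" where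
  "planar_map D \<sigma> \<alpha> \<longleftrightarrow>
     (\<forall>x\<in>D. let K = map_component D \<sigma> \<alpha> x in
        int (card (orbit \<sigma> ` K)) - int (card (orbit \<alpha> ` K))
          + int (card (orbit (\<sigma> \<circ> \<alpha>) ` K)) = 2)"

text \<open>A simulation: finite vertex set V (vertices are naturals), labels lab,
  half-edges (v,i) with v in V and i a port of lab v, and an involution m on
  half-edges: m h = h means h is a dangling edge, otherwise {h, m h} is an edge
  (possibly a self-loop joining two ports of the same vertex).\<close>

definition halfedges :: "nat set \<Rightarrow> (nat \<Rightarrow> gadget) \<Rightarrow> (nat \<times> nat) set" where
  "halfedges V lab = {(v, i). v \<in> V \<and> i < fst (lab v)}"

definition wf_sim :: "nat set \<Rightarrow> (nat \<Rightarrow> gadget) \<Rightarrow> (nat \<times> nat \<Rightarrow> nat \<times> nat) \<Rightarrow> bool" where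
  "wf_sim V lab m \<longleftrightarrow> finite V \<and>
     (\<forall>h\<in>halfedges V lab. m h \<in> halfedges V lab \<and> m (m h) = h)"

definition dangling :: "nat set \<Rightarrow> (nat \<Rightarrow> gadget) \<Rightarrow> (nat \<times> nat \<Rightarrow> nat \<times> nat) \<Rightarrow> (nat \<times> nat) set" where
  "dangling V lab m = {h \<in> halfedges V lab. m h = h}"

text \<open>An assignment a: a h = True means the edge at half-edge h points into
  the vertex of h (for a dangling edge: into the simulation). Every internal edge
  points into exactly one of its two ends.\<close>

definition good_assignment ::
  "nat set \<Rightarrow> (nat \<Rightarrow> gadget) \<Rightarrow> (nat \<times> nat \<Rightarrow> nat \<times> nat) \<Rightarrow> (nat \<times> nat \<Rightarrow> bool) \<Rightarrow> bool" where
  "good_assignment V lab m a \<longleftrightarrow>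
     (\<forall>h\<in>halfedges V lab. m h \<noteq> h \<longrightarrow> a (m h) \<noteq> a h) \<and>
     (\<forall>v\<in>V. {i. i < fst (lab v) \<and> a (v, i)} \<in> snd (lab v))"

definition realizes ::
  "nat set \<Rightarrow> (nat \<Rightarrow> gadget) \<Rightarrow> (nat \<times> nat \<Rightarrow> nat \<times> nat) \<Rightarrow> (nat \<times> nat \<Rightarrow> bool)
     \<Rightarrow> (nat \<times> nat) set \<Rightarrow> bool" where
  "realizes V lab m a D \<longleftrightarrow> D = {h \<in> dangling V lab m. a h}"

definition sim_constraint ::
  "nat set \<Rightarrow> (nat \<Rightarrow> gadget) \<Rightarrow> (nat \<times> nat \<Rightarrow> nat \<times> nat) \<Rightarrow> (nat \<times> nat) set set" where
  "sim_constraint V lab m =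
     {D. \<exists>a. good_assignment V lab m a \<and> realizes V lab m a D}"

definition parsimonious ::
  "nat set \<Rightarrow> (nat \<Rightarrow> gadget) \<Rightarrow> (nat \<times> nat \<Rightarrow> nat \<times> nat) \<Rightarrow> bool" where
  "parsimonious V lab m \<longleftrightarrow>
     (\<forall>D\<in>sim_constraint V lab m. \<forall>a b.
        good_assignment V lab m a \<and> realizes V lab m a D \<and>
        good_assignment V lab m b \<and> realizes V lab m b D \<longrightarrow>
        (\<forall>h\<in>halfedges V lab. a h = b h))"

text \<open>Planar embedding of the simulation together with the outside-world vertex.
  Darts: Inl h for each half-edge h of a gadget vertex, Inr h for the end of the
  dangling edge h at the outside world. Rotation at a gadget vertex follows its
  port cyclic order; rho is the cyclic order of the dangling edges at the
  outside-world vertex (a single cycle on the dangling edges).\<close>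

definition sim_darts :: "nat set \<Rightarrow> (nat \<Rightarrow> gadget) \<Rightarrow> (nat \<times> nat \<Rightarrow> nat \<times> nat)
     \<Rightarrow> ((nat \<times> nat) + (nat \<times> nat)) set" where
  "sim_darts V lab m = Inl ` halfedges V lab \<union> Inr ` dangling V lab m"

definition sim_rot :: "(nat \<Rightarrow> gadget) \<Rightarrow> (nat \<times> nat \<Rightarrow> nat \<times> nat)
     \<Rightarrow> (nat \<times> nat) + (nat \<times> nat) \<Rightarrow> (nat \<times> nat) + (nat \<times> nat)" where
  "sim_rot lab \<rho> d = (case d of
      Inl (v, i) \<Rightarrow> Inl (v, Suc i mod fst (lab v))
    | Inr h \<Rightarrow> Inr (\<rho> h))"

definition sim_edge :: "(nat \<times> nat \<Rightarrow> nat \<times> nat)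
     \<Rightarrow> (nat \<times> nat) + (nat \<times> nat) \<Rightarrow> (nat \<times> nat) + (nat \<times> nat)" where
  "sim_edge m d = (case d of
      Inl h \<Rightarrow> (if m h = h then Inr h else Inl (m h))
    | Inr h \<Rightarrow> Inl h)"

definition outside_rotation ::
  "nat set \<Rightarrow> (nat \<Rightarrow> gadget) \<Rightarrow> (nat \<times> nat \<Rightarrow> nat \<times> nat) \<Rightarrow> (nat \<times> nat \<Rightarrow> nat \<times> nat) \<Rightarrow> bool" where
  "outside_rotation V lab m \<rho> \<longleftrightarrow>
     bij_betw \<rho> (dangling V lab m) (dangling V lab m) \<and>
     (\<forall>h\<in>dangling V lab m. \<forall>h'\<in>dangling V lab m. \<exists>k. (\<rho> ^^ k) h = h')"

definition planar_sim ::
  "nat set \<Rightarrow> (nat \<Rightarrow> gadget) \<Rightarrow> (nat \<times> nat \<Rightarrow> nat \<times> nat) \<Rightarrow> (nat \<times> nat \<Rightarrow> nat \<times> nat) \<Rightarrow> bool" where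
  "planar_sim V lab m \<rho> \<longleftrightarrow>
     outside_rotation V lab m \<rho> \<and>
     planar_map (sim_darts V lab m) (sim_rot lab \<rho>) (sim_edge m)"

text \<open>S parsimoniously simulates G (planarly): there is a planar parsimonious
  simulation using gadgets from S and a bijection p from its dangling edges onto
  the ports of G that respects the cyclic order of the dangling edges around the
  simulation (which is the reverse of the rotation rho at the outside-world vertex)
  and carries the simulated constraint onto the constraint of G.\<close>

definition planar_parsimoniously_simulates :: "gadget set \<Rightarrow> gadget \<Rightarrow> bool" where
  "planar_parsimoniously_simulates S G \<longleftrightarrow>
     (\<exists>V lab m \<rho> p.
        wf_sim V lab m \<and> (\<forall>v\<in>V. lab v \<in> S) \<and>
        planar_sim V lab m \<rho> \<and>
        parsimonious V lab m \<and>
        bij_betw p (dangling V lab m) {0..<fst G} \<and>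
        (\<forall>h\<in>dangling V lab m. p h = Suc (p (\<rho> h)) mod fst G) \<and>
        (\<lambda>D. p ` D) ` sim_constraint V lab m = snd G)"

end

theory Submission
  imports Defs
begin

fun chn :: "('a \<Rightarrow> 'a \<Rightarrow> bool) \<Rightarrow> 'a \<Rightarrow> 'a list \<Rightarrow> bool" where
  "chn P x0 [] = True"
| "chn P x0 [y] = P y x0"
| "chn P x0 (y # z # r) = (P y z \<and> chn P x0 (z # r))"

definition cyc :: "('a \<Rightarrow> 'a \<Rightarrow> bool) \<Rightarrow> 'a list \<Rightarrow> bool" where
  "cyc P xs \<longleftrightarrow> xs \<noteq> [] \<and> chn P (hd xs) xs"

lemma chn_nth: "chn P x0 ys \<Longrightarrow> i < length ys \<Longrightarrow>
   P (ys!i) (if Suc i = length ys then x0 else ys!Suc i)"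
proof (induction P x0 ys arbitrary: i rule: chn.induct)
  case (3 P x0 y z r)
  show ?case
  proof (cases i)
    case 0 then show ?thesis using "3.prems" by simp
  next
    case (Suc j) then show ?thesis using "3.IH"[of j] "3.prems" by auto
  qed
qed auto

lemma cyc_nth: "cyc P xs \<Longrightarrow> i < length xs \<Longrightarrow> P (xs!i) (xs!(Suc i mod length xs))"
proof -
  assume c: "cyc P xs" and i: "i < length xs"
  from c have ne: "xs \<noteq> []" and ch: "chn P (hd xs) xs" by (auto simp: cyc_def)
  have h: "hd xs = xs!0" using ne by (simp add: hd_conv_nth)
  from chn_nth[OF ch i] show ?thesis
    using i unfolding h by (cases "Suc i = length xs") auto
qed

lemma cyc_ne: "cyc P xs \<Longrightarrow> xs \<noteq> []" by (simp add: cyc_def)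

lemma cyc_funpow:
  assumes c: "cyc (\<lambda>u v. f u = v) xs" and i: "i < length xs"
  shows "(f^^k) (xs!i) = xs!((i+k) mod length xs)"
proof (induction k)
  case 0 then show ?case using i by simp
next
  case (Suc k)
  have n: "length xs > 0" using i(1) by linarith
  have "(f^^Suc k) (xs!i) = f (xs!((i+k) mod length xs))" using Suc by simp
  also have "\<dots> = xs!(Suc ((i+k) mod length xs) mod length xs)"
    using cyc_nth[OF c, of "(i+k) mod length xs"] n by simp
  also have "Suc ((i+k) mod length xs) mod length xs = (i + Suc k) mod length xs"
    by (simp add: mod_Suc_eq)
  finally show ?case .
qed

lemma cyc_orbit:
  assumes c: "cyc (\<lambda>u v. f u = v) xs" and x: "x \<in> set xs"
  shows "orbit f x = set xs"
proof -
  obtain i where i: "i < length xs" "x = xs!i" using x by (auto simp: in_set_conv_nth)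
  let ?n = "length xs"
  show ?thesis
  proof
    have n: "length xs > 0" using i(1) by linarith
    show "orbit f x \<subseteq> set xs"
      using cyc_funpow[OF c i(1)] i n by (auto simp: orbit_def intro!: nth_mem)
  next
    show "set xs \<subseteq> orbit f x"
    proof
      fix y assume "y \<in> set xs"
      then obtain j where j: "j < ?n" "y = xs!j" by (auto simp: in_set_conv_nth)
      have "(f^^(j + ?n - i)) x = xs!((i + (j + ?n - i)) mod ?n)"
        using cyc_funpow[OF c i(1)] i by simp
      also have "(i + (j + ?n - i)) mod ?n = j" using i j by simp
      finally show "y \<in> orbit f x" using j unfolding orbit_def by (metis (mono_tags, lifting) mem_Collect_eq)
    qed
  qed
qed

lemma cyc_card:
  assumes c: "\<forall>c\<in>set cs. cyc (\<lambda>u v. f u = v) c" and d: "distinct (concat cs)"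
  shows "card (orbit f ` set (concat cs)) = length cs"
proof -
  have ne: "\<forall>c\<in>set cs. c \<noteq> []" using c cyc_ne by blast
  have img: "orbit f ` set (concat cs) = set ` set cs"
  proof
    show "orbit f ` set (concat cs) \<subseteq> set ` set cs"
      using c cyc_orbit by fastforce
  next
    show "set ` set cs \<subseteq> orbit f ` set (concat cs)"
    proof
      fix s assume "s \<in> set ` set cs"
      then obtain c0 where c0: "c0 \<in> set cs" "s = set c0" by auto
      then have "hd c0 \<in> set c0" using ne by auto
      then show "s \<in> orbit f ` set (concat cs)"
        using c0 c cyc_orbit[of f c0 "hd c0"] by force
    qed
  qed
  have dd: "distinct (removeAll [] cs)"
    and disj: "\<forall>ys zs. ys \<in> set cs \<and> zs \<in> set cs \<and> ys \<noteq> zs \<longrightarrow> set ys \<inter> set zs = {}"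
    using d by (auto simp: distinct_concat_iff)
  have "[] \<notin> set cs" using ne by blast
  then have rm: "removeAll [] cs = cs" by simp
  have dcs: "distinct cs" using dd rm by simp
  have inj: "inj_on set (set cs)"
  proof (rule inj_onI)
    fix x y assume "x \<in> set cs" "y \<in> set cs" "set x = set y"
    show "x = y"
    proof (rule ccontr)
      assume "x \<noteq> y"
      then have "set x \<inter> set y = {}" using disj \<open>x \<in> set cs\<close> \<open>y \<in> set cs\<close> by blast
      then have "set x = {}" using \<open>set x = set y\<close> by simp
      then show False using ne \<open>x \<in> set cs\<close> by simp
    qed
  qed
  have "card (set ` set cs) = card (set cs)" by (rule card_image[OF inj])
  also have "\<dots> = length cs" by (rule distinct_card[OF dcs])
  finally show ?thesis unfolding img .
qed

lemma cyc_rtrancl: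
  assumes c: "cyc (\<lambda>u v. (u,v) \<in> R) xs" and x: "x \<in> set xs" and y: "y \<in> set xs"
  shows "(x,y) \<in> R\<^sup>*"
proof -
  let ?n = "length xs"
  obtain i where i: "i < ?n" "x = xs!i" using x by (auto simp: in_set_conv_nth)
  obtain j where j: "j < ?n" "y = xs!j" using y by (auto simp: in_set_conv_nth)
  have n: "?n > 0" using i(1) by linarith
  have step: "\<And>k. (xs!i, xs!((i+k) mod ?n)) \<in> R\<^sup>*"
  proof -
    fix k show "(xs!i, xs!((i+k) mod ?n)) \<in> R\<^sup>*"
    proof (induction k)
      case 0 then show ?case using i by simp
    next
      case (Suc k)
      have "(xs!((i+k) mod ?n), xs!(Suc ((i+k) mod ?n) mod ?n)) \<in> R"
        using cyc_nth[OF c, of "(i+k) mod ?n"] n by simp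
      moreover have "Suc ((i+k) mod ?n) mod ?n = (i + Suc k) mod ?n"
        by (simp add: mod_Suc_eq)
      ultimately show ?case using Suc by (metis rtrancl_into_rtrancl)
    qed
  qed
  have "(i + (j + ?n - i)) mod ?n = j" using i j by simp
  then show ?thesis using step[of "j + ?n - i"] i j by simp
qed

lemma chn_mono: "chn P x0 xs \<Longrightarrow> (\<And>u v. u \<in> set xs \<Longrightarrow> P u v \<Longrightarrow> Q u v) \<Longrightarrow> chn Q x0 xs"
proof (induction P x0 xs rule: chn.induct)
  case (1 P x0) then show ?case by simp
next
  case (2 P x0 y) then show ?case by simp
next
  case (3 P x0 y z r)
  have "P y z" "chn P x0 (z # r)" using "3.prems"(1) by simp_all
  then have "Q y z" using "3.prems"(2) by simp
  moreover have "chn Q x0 (z # r)" using "3.IH" \<open>chn P x0 (z # r)\<close> "3.prems"(2) by simp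
  ultimately show ?case by simp
qed

lemma comp_all:
  assumes cl: "\<forall>u\<in>D. \<sigma> u \<in> D \<and> \<alpha> u \<in> D"
    and w: "cyc (\<lambda>u v. v = \<sigma> u \<or> v = \<alpha> u) ws" and ws: "set ws = D"
    and x: "x \<in> D"
  shows "map_component D \<sigma> \<alpha> x = D"
proof -
  define R where "R = {(u, \<sigma> u) | u. u \<in> D} \<union> {(u, \<alpha> u) | u. u \<in> D}"
  have sub: "y \<in> D" if "(x,y) \<in> R\<^sup>*" for y
    using that
  proof (induction rule: rtrancl_induct)
    case base then show ?case using x .
  next
    case (step y z) then show ?case using cl unfolding R_def by blast
  qed
  have st: "\<And>u v. u \<in> set ws \<Longrightarrow> v = \<sigma> u \<or> v = \<alpha> u \<Longrightarrow> (u,v) \<in> R"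
    using ws unfolding R_def by blast
  have ne: "ws \<noteq> []" using w by (simp add: cyc_def)
  have "chn (\<lambda>u v. v = \<sigma> u \<or> v = \<alpha> u) (hd ws) ws" using w by (simp add: cyc_def)
  then have "chn (\<lambda>u v. (u,v) \<in> R) (hd ws) ws" by (rule chn_mono) (rule st)
  then have w': "cyc (\<lambda>u v. (u,v) \<in> R) ws" using ne by (simp add: cyc_def)
  have mc: "map_component D \<sigma> \<alpha> x = {y. (x,y) \<in> R\<^sup>*}"
    unfolding map_component_def R_def by simp
  show ?thesis
  proof
    show "map_component D \<sigma> \<alpha> x \<subseteq> D" unfolding mc using sub by blast
    show "D \<subseteq> map_component D \<sigma> \<alpha> x"
    proof
      fix y assume "y \<in> D"
      then have "(x,y) \<in> R\<^sup>*" using cyc_rtrancl[OF w', of x y] x ws by simp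
      then show "y \<in> map_component D \<sigma> \<alpha> x" unfolding mc by simp
    qed
  qed
qed

definition V0 :: "nat set" where "V0 = {0,1,2,3,4,5,6,7,8,9}"
definition lab0 :: "nat \<Rightarrow> gadget" where
  "lab0 v = (if v = 0 \<or> v = 1 \<or> v = 5 then one_in_three else if v = 2 then fanout 3
     else if v = 3 \<or> v = 4 then fanout 2 else free_terminal)"
definition rho0 :: "nat \<times> nat \<Rightarrow> nat \<times> nat" where
  "rho0 h = (if h = (0,0) then (1,0) else if h = (1,0) then (2,2) else if h = (2,2) then (0,0) else h)"
definition p0 :: "nat \<times> nat \<Rightarrow> nat" where
  "p0 h = (if h = (0,0) then 1 else if h = (2,2) then 2 else 0)"
definition dl :: "((nat \<times> nat) + (nat \<times> nat)) list" where
  "dl = [Inr (0, 0), Inr (1, 0), Inr (2, 2), Inl (0, 0), Inl (0, 1), Inl (0, 2), Inl (1, 0), Inl (1, 1), Inl (1, 2), Inl (2, 0), Inl (2, 1), Inl (2, 2), Inl (2, 3), Inl (3, 0), Inl (3, 1), Inl (3, 2), Inl (4, 0), Inl (4, 1), Inl (4, 2), Inl (5, 0), Inl (5, 1), Inl (5, 2), Inl (6, 0), Inl (7, 0), Inl (8, 0), Inl (9, 0)]"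

definition vcs :: "((nat \<times> nat) + (nat \<times> nat)) list list" where
  "vcs = [[Inl (0, 0), Inl (0, 1), Inl (0, 2)], [Inl (1, 0), Inl (1, 1), Inl (1, 2)], [Inl (2, 0), Inl (2, 1), Inl (2, 2), Inl (2, 3)], [Inl (3, 0), Inl (3, 1), Inl (3, 2)], [Inl (4, 0), Inl (4, 1), Inl (4, 2)], [Inl (5, 0), Inl (5, 1), Inl (5, 2)], [Inl (6, 0)], [Inl (7, 0)], [Inl (8, 0)], [Inl (9, 0)], [Inr (0, 0), Inr (1, 0), Inr (2, 2)]]"

definition ecs :: "((nat \<times> nat) + (nat \<times> nat)) list list" where
  "ecs = [[Inl (0, 0), Inr (0, 0)], [Inl (0, 1), Inl (2, 1)], [Inl (0, 2), Inl (3, 1)], [Inl (1, 0), Inr (1, 0)], [Inl (1, 1), Inl (4, 1)], [Inl (1, 2), Inl (2, 3)], [Inl (2, 0), Inl (6, 0)], [Inl (2, 2), Inr (2, 2)], [Inl (3, 0), Inl (7, 0)], [Inl (3, 2), Inl (5, 0)], [Inl (4, 0), Inl (8, 0)], [Inl (4, 2), Inl (5, 1)], [Inl (5, 2), Inl (9, 0)]]"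

definition fcs :: "((nat \<times> nat) + (nat \<times> nat)) list list" where
  "fcs = [[Inl (0, 0), Inr (1, 0), Inl (1, 1), Inl (4, 2), Inl (5, 2), Inl (9, 0), Inl (5, 0), Inl (3, 0), Inl (7, 0), Inl (3, 1)], [Inl (0, 1), Inl (2, 2), Inr (0, 0)], [Inl (0, 2), Inl (3, 2), Inl (5, 1), Inl (4, 0), Inl (8, 0), Inl (4, 1), Inl (1, 2), Inl (2, 0), Inl (6, 0), Inl (2, 1)], [Inl (1, 0), Inr (2, 2), Inl (2, 3)]]"

definition wl :: "((nat \<times> nat) + (nat \<times> nat)) list" where
  "wl = [Inl (0, 0), Inl (0, 1), Inl (0, 2), Inl (3, 1), Inl (3, 2), Inl (3, 0), Inl (7, 0), Inl (3, 0), Inl (3, 1), Inl (3, 2), Inl (5, 0), Inl (5, 1), Inl (5, 2), Inl (9, 0), Inl (5, 2), Inl (5, 0), Inl (5, 1), Inl (4, 2), Inl (4, 0), Inl (4, 1), Inl (1, 1), Inl (1, 2), Inl (1, 0), Inr (1, 0), Inr (2, 2), Inr (0, 0), Inr (1, 0), Inr (2, 2), Inl (2, 2), Inl (2, 3), Inl (2, 0), Inl (2, 1), Inl (2, 2), Inl (2, 3), Inl (2, 0), Inl (6, 0), Inl (2, 0), Inl (2, 1), Inl (2, 2), Inl (2, 3), Inl (1, 2), Inl (1, 0), Inl (1, 1), Inl (4, 1), Inl (4, 2), Inl (4, 0), Inl (8, 0), Inl (4, 0), Inl (4, 1), Inl (1, 1), Inl (1, 2), Inl (1, 0), Inr (1,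 0), Inr (2, 2), Inr (0, 0)]"

definition H0 :: "(nat \<times> nat) set" where
  "H0 = {(0, 0), (0, 1), (0, 2), (1, 0), (1, 1), (1, 2), (2, 0), (2, 1), (2, 2), (2, 3), (3, 0), (3, 1), (3, 2), (4, 0), (4, 1), (4, 2), (5, 0), (5, 1), (5, 2), (6, 0), (7, 0), (8, 0), (9, 0)}"

definition elist :: "((nat \<times> nat) \<times> (nat \<times> nat)) list" where
  "elist = [((0, 1), (2, 1)), ((2, 1), (0, 1)), ((0, 2), (3, 1)), ((3, 1), (0, 2)), ((1, 2), (2, 3)), ((2, 3), (1, 2)), ((1, 1), (4, 1)), ((4, 1), (1, 1)), ((2, 0), (6, 0)), ((6, 0), (2, 0)), ((3, 2), (5, 0)), ((5, 0), (3, 2)), ((3, 0), (7, 0)), ((7, 0), (3, 0)), ((4, 2), (5, 1)), ((5, 1), (4, 2)), ((4, 0), (8, 0)), ((8, 0), (4, 0)), ((5, 2), (9, 0)), ((9, 0), (5, 2))]"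

definition m0 :: "nat \<times> nat \<Rightarrow> nat \<times> nat" where
  "m0 h = (case map_of elist h of Some q \<Rightarrow> q | None \<Rightarrow> h)"

lemma lab0_simps[simp]:
  "lab0 0 = one_in_three" "lab0 1 = one_in_three" "lab0 (Suc 0) = one_in_three" "lab0 5 = one_in_three"
  "lab0 2 = fanout 3" "lab0 3 = fanout 2" "lab0 4 = fanout 2"
  "lab0 6 = free_terminal" "lab0 7 = free_terminal" "lab0 8 = free_terminal" "lab0 9 = free_terminal"
  by (simp_all add: lab0_def)

lemma fst_lab[simp]: "fst one_in_three = 3" "fst (fanout k) = k + 1" "fst free_terminal = 1"
  by (simp_all add: one_in_three_def fanout_def free_terminal_def)

lemma lt_cases: "(i::nat) < 1 \<Longrightarrow> i = 0" "(i::nat) < 3 \<Longrightarrow> i = 0 \<or> i = 1 \<or> i = 2"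
  "(i::nat) < 4 \<Longrightarrow> i = 0 \<or> i = 1 \<or> i = 2 \<or> i = 3"
  by arith+

lemma H0_eq: "halfedges V0 lab0 = H0"
proof
  show "halfedges V0 lab0 \<subseteq> H0"
  proof
    fix h assume "h \<in> halfedges V0 lab0"
    then obtain v i where h: "h = (v,i)" and v: "v \<in> V0" and i: "i < fst (lab0 v)"
      unfolding halfedges_def by blast
    from v have "v = 0 \<or> v = 1 \<or> v = 2 \<or> v = 3 \<or> v = 4 \<or> v = 5 \<or> v = 6 \<or> v = 7 \<or> v = 8 \<or> v = 9"
      by (simp add: V0_def)
    then show "h \<in> H0" using i unfolding h
      by (elim disjE) (simp_all add: H0_def, (drule lt_cases, simp)+)
  qed
  show "H0 \<subseteq> halfedges V0 lab0"
    by (simp add: H0_def halfedges_def V0_def)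
qed

lemma m0_vals[simp]:
  "m0 (0, 0) = (0, 0)"
  "m0 (0, Suc 0) = (2, Suc 0)"
  "m0 (0, 2) = (3, Suc 0)"
  "m0 (Suc 0, 0) = (Suc 0, 0)"
  "m0 (Suc 0, Suc 0) = (4, Suc 0)"
  "m0 (Suc 0, 2) = (2, 3)"
  "m0 (2, 0) = (6, 0)"
  "m0 (2, Suc 0) = (0, Suc 0)"
  "m0 (2, 2) = (2, 2)"
  "m0 (2, 3) = (Suc 0, 2)"
  "m0 (3, 0) = (7, 0)"
  "m0 (3, Suc 0) = (0, 2)"
  "m0 (3, 2) = (5, 0)"
  "m0 (4, 0) = (8, 0)"
  "m0 (4, Suc 0) = (Suc 0, Suc 0)"
  "m0 (4, 2) = (5, Suc 0)"
  "m0 (5, 0) = (3, 2)"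
  "m0 (5, Suc 0) = (4, 2)"
  "m0 (5, 2) = (9, 0)"
  "m0 (6, 0) = (2, 0)"
  "m0 (7, 0) = (3, 0)"
  "m0 (8, 0) = (4, 0)"
  "m0 (9, 0) = (5, 2)"
  by (simp_all add: m0_def elist_def)

lemma dang_eq: "dangling V0 lab0 m0 = {(0,0),(1,0),(2,2)}"
  unfolding dangling_def H0_eq H0_def by auto

lemma darts_eq: "sim_darts V0 lab0 m0 = set dl"
  unfolding sim_darts_def H0_eq dang_eq by (simp add: H0_def dl_def)


lemma rho0_vals[simp]: "rho0 (0,0) = (Suc 0,0)" "rho0 (Suc 0,0) = (2,2)" "rho0 (2,2) = (0,0)"
  by (simp_all add: rho0_def)

lemma rot_vals[simp]:
  "sim_rot lab0 rho0 (Inl (0, 0)) = Inl (0, Suc 0)"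
  "sim_rot lab0 rho0 (Inl (0, Suc 0)) = Inl (0, 2)"
  "sim_rot lab0 rho0 (Inl (0, 2)) = Inl (0, 0)"
  "sim_rot lab0 rho0 (Inl (Suc 0, 0)) = Inl (Suc 0, Suc 0)"
  "sim_rot lab0 rho0 (Inl (Suc 0, Suc 0)) = Inl (Suc 0, 2)"
  "sim_rot lab0 rho0 (Inl (Suc 0, 2)) = Inl (Suc 0, 0)"
  "sim_rot lab0 rho0 (Inl (2, 0)) = Inl (2, Suc 0)"
  "sim_rot lab0 rho0 (Inl (2, Suc 0)) = Inl (2, 2)"
  "sim_rot lab0 rho0 (Inl (2, 2)) = Inl (2, 3)"
  "sim_rot lab0 rho0 (Inl (2, 3)) = Inl (2, 0)"
  "sim_rot lab0 rho0 (Inl (3, 0)) = Inl (3, Suc 0)"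
  "sim_rot lab0 rho0 (Inl (3, Suc 0)) = Inl (3, 2)"
  "sim_rot lab0 rho0 (Inl (3, 2)) = Inl (3, 0)"
  "sim_rot lab0 rho0 (Inl (4, 0)) = Inl (4, Suc 0)"
  "sim_rot lab0 rho0 (Inl (4, Suc 0)) = Inl (4, 2)"
  "sim_rot lab0 rho0 (Inl (4, 2)) = Inl (4, 0)"
  "sim_rot lab0 rho0 (Inl (5, 0)) = Inl (5, Suc 0)"
  "sim_rot lab0 rho0 (Inl (5, Suc 0)) = Inl (5, 2)"
  "sim_rot lab0 rho0 (Inl (5, 2)) = Inl (5, 0)"
  "sim_rot lab0 rho0 (Inl (6, 0)) = Inl (6, 0)"
  "sim_rot lab0 rho0 (Inl (7, 0)) = Inl (7, 0)"
  "sim_rot lab0 rho0 (Inl (8, 0)) = Inl (8, 0)"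
  "sim_rot lab0 rho0 (Inl (9, 0)) = Inl (9, 0)"
  "sim_rot lab0 rho0 (Inr (0, 0)) = Inr (Suc 0, 0)"
  "sim_rot lab0 rho0 (Inr (Suc 0, 0)) = Inr (2, 2)"
  "sim_rot lab0 rho0 (Inr (2, 2)) = Inr (0, 0)"
  by (simp_all add: sim_rot_def)

lemma edge_vals[simp]:
  "sim_edge m0 (Inl (0, 0)) = Inr (0, 0)"
  "sim_edge m0 (Inl (0, Suc 0)) = Inl (2, Suc 0)"
  "sim_edge m0 (Inl (0, 2)) = Inl (3, Suc 0)"
  "sim_edge m0 (Inl (Suc 0, 0)) = Inr (Suc 0, 0)"
  "sim_edge m0 (Inl (Suc 0, Suc 0)) = Inl (4, Suc 0)"
  "sim_edge m0 (Inl (Suc 0, 2)) = Inl (2, 3)"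
  "sim_edge m0 (Inl (2, 0)) = Inl (6, 0)"
  "sim_edge m0 (Inl (2, Suc 0)) = Inl (0, Suc 0)"
  "sim_edge m0 (Inl (2, 2)) = Inr (2, 2)"
  "sim_edge m0 (Inl (2, 3)) = Inl (Suc 0, 2)"
  "sim_edge m0 (Inl (3, 0)) = Inl (7, 0)"
  "sim_edge m0 (Inl (3, Suc 0)) = Inl (0, 2)"
  "sim_edge m0 (Inl (3, 2)) = Inl (5, 0)"
  "sim_edge m0 (Inl (4, 0)) = Inl (8, 0)"
  "sim_edge m0 (Inl (4, Suc 0)) = Inl (Suc 0, Suc 0)"
  "sim_edge m0 (Inl (4, 2)) = Inl (5, Suc 0)"
  "sim_edge m0 (Inl (5, 0)) = Inl (3, 2)"
  "sim_edge m0 (Inl (5, Suc 0)) = Inl (4, 2)"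
  "sim_edge m0 (Inl (5, 2)) = Inl (9, 0)"
  "sim_edge m0 (Inl (6, 0)) = Inl (2, 0)"
  "sim_edge m0 (Inl (7, 0)) = Inl (3, 0)"
  "sim_edge m0 (Inl (8, 0)) = Inl (4, 0)"
  "sim_edge m0 (Inl (9, 0)) = Inl (5, 2)"
  "sim_edge m0 (Inr (0, 0)) = Inl (0, 0)"
  "sim_edge m0 (Inr (Suc 0, 0)) = Inl (Suc 0, 0)"
  "sim_edge m0 (Inr (2, 2)) = Inl (2, 2)"
  by (simp add: sim_edge_def)+

lemma cl0: "\<forall>u\<in>set dl. sim_rot lab0 rho0 u \<in> set dl \<and> sim_edge m0 u \<in> set dl"
  by (simp add: dl_def)

lemma walk0: "cyc (\<lambda>u v. v = sim_rot lab0 rho0 u \<or> v = sim_edge m0 u) wl"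
  by (simp add: cyc_def wl_def)

lemma wl_set: "set wl = set dl"
  unfolding wl_def dl_def by code_simp

lemma vcs_ok: "\<forall>c\<in>set vcs. cyc (\<lambda>u v. sim_rot lab0 rho0 u = v) c"
  by (simp add: vcs_def cyc_def)
lemma ecs_ok: "\<forall>c\<in>set ecs. cyc (\<lambda>u v. sim_edge m0 u = v) c"
  by (simp add: ecs_def cyc_def)
lemma fcs_ok: "\<forall>c\<in>set fcs. cyc (\<lambda>u v. (sim_rot lab0 rho0 \<circ> sim_edge m0) u = v) c"
  by (simp add: fcs_def cyc_def)
lemma cs_distinct: "distinct (concat vcs)" "distinct (concat ecs)" "distinct (concat fcs)"
  by (simp_all add: vcs_def ecs_def fcs_def)
lemma cs_set: "set (concat vcs) = set dl" "set (concat ecs) = set dl" "set (concat fcs) = set dl"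
  unfolding vcs_def ecs_def fcs_def dl_def by (rule equalityI; simp)+
lemma cs_len: "length vcs = 11" "length ecs = 13" "length fcs = 4"
  by (simp_all add: vcs_def ecs_def fcs_def)

lemma planar0: "planar_map (sim_darts V0 lab0 m0) (sim_rot lab0 rho0) (sim_edge m0)"
  unfolding planar_map_def darts_eq Let_def
proof
  fix x assume x: "x \<in> set dl"
  have K: "map_component (set dl) (sim_rot lab0 rho0) (sim_edge m0) x = set dl"
    by (rule comp_all[OF cl0 walk0 wl_set x])
  have a: "card (orbit (sim_rot lab0 rho0) ` set dl) = 11"
    using cyc_card[OF vcs_ok cs_distinct(1)] cs_set(1) cs_len(1) by simp
  have b: "card (orbit (sim_edge m0) ` set dl) = 13"
    using cyc_card[OF ecs_ok cs_distinct(2)] cs_set(2) cs_len(2) by simp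
  have c0: "card (orbit (sim_rot lab0 rho0 \<circ> sim_edge m0) ` set (concat fcs)) = length fcs"
    by (rule cyc_card[OF fcs_ok cs_distinct(3)])
  then have c: "card (orbit (sim_rot lab0 rho0 \<circ> sim_edge m0) ` set dl) = 4"
    unfolding cs_set(3) cs_len(3) .
  show "int (card (orbit (sim_rot lab0 rho0) ` map_component (set dl) (sim_rot lab0 rho0) (sim_edge m0) x)) -
        int (card (orbit (sim_edge m0) ` map_component (set dl) (sim_rot lab0 rho0) (sim_edge m0) x)) +
        int (card (orbit (sim_rot lab0 rho0 \<circ> sim_edge m0) ` map_component (set dl) (sim_rot lab0 rho0) (sim_edge m0) x)) = 2"
    unfolding K a b c by simp
qed

lemma three_set: "{i. i < (3::nat) \<and> P i} =
   (if P 0 then {0} else {}) \<union> (if P 1 then {1} else {}) \<union> (if P 2 then {2} else {})"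
  by (auto dest: lt_cases(2) split: if_splits)

lemma four_set: "{i. i < (4::nat) \<and> P i} =
   (if P 0 then {0} else {}) \<union> (if P 1 then {1} else {}) \<union> (if P 2 then {2} else {}) \<union> (if P 3 then {3} else {})"
  by (auto dest: lt_cases(3) split: if_splits)

lemma T_ok[simp]: "({i. i < 3 \<and> P i} \<in> snd one_in_three) =
   ((P 0 \<and> \<not> P 1 \<and> \<not> P 2) \<or> (\<not> P 0 \<and> P 1 \<and> \<not> P 2) \<or> (\<not> P 0 \<and> \<not> P 1 \<and> P 2))"
  unfolding three_set one_in_three_def
  by (cases "P 0"; cases "P 1"; cases "P 2"; simp)

lemma G2_ok[simp]: "({i. i < 3 \<and> P i} \<in> snd (fanout 2)) =
   ((P 0 \<and> \<not> P 1 \<and> \<not> P 2) \<or> (\<not> P 0 \<and> P 1 \<and> P 2))"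
proof -
  have e: "{1..2::nat} = {1,2}" by auto
  show ?thesis unfolding three_set fanout_def snd_conv e
    by (cases "P 0"; cases "P 1"; cases "P 2"; simp; auto simp: set_eq_iff)
qed

lemma G3_ok[simp]: "({i. i < 4 \<and> P i} \<in> snd (fanout 3)) =
   ((P 0 \<and> \<not> P 1 \<and> \<not> P 2 \<and> \<not> P 3) \<or> (\<not> P 0 \<and> P 1 \<and> P 2 \<and> P 3))"
proof -
  have e: "{1..3::nat} = {1,2,3}" by auto
  show ?thesis unfolding four_set fanout_def snd_conv e
    by (cases "P 0"; cases "P 1"; cases "P 2"; cases "P 3"; simp; (auto simp: set_eq_iff)?; rule exI[of _ "Suc 0"]; simp)
qed

lemma FT_ok[simp]: "({i. i = 0 \<and> P i} \<in> snd free_terminal)"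
  by (cases "P 0") (auto simp: free_terminal_def)

definition F :: "bool \<Rightarrow> bool \<Rightarrow> nat \<times> nat \<Rightarrow> bool" where
 "F x y h = (if h = (0,0) then x else if h = (0,1) then \<not>x \<and> \<not>y else if h = (0,2) then \<not>x \<and> y
   else if h = (1,0) then y else if h = (1,1) then x \<and> \<not>y else if h = (1,2) then \<not>x \<and> \<not>y
   else if h = (2,0) then \<not>x \<and> \<not>y else if h = (2,1) then x \<or> y else if h = (2,2) then x \<or> y
   else if h = (2,3) then x \<or> y else if h = (3,0) then \<not>x \<and> y else if h = (3,1) then x \<or> \<not>y
   else if h = (3,2) then x \<or> \<not>y else if h = (4,0) then x \<and> \<not>y else if h = (4,1) then \<not>x \<or> y
   else if h = (4,2) then \<not>x \<or> y else if h = (5,0) then \<not>x \<and> y else if h = (5,1) then x \<and> \<not>y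
   else if h = (5,2) then (x \<and> y) \<or> (\<not>x \<and> \<not>y) else if h = (6,0) then x \<or> y else if h = (7,0) then x \<or> \<not>y
   else if h = (8,0) then \<not>x \<or> y else if h = (9,0) then (x \<and> \<not>y) \<or> (\<not>x \<and> y) else False)"

lemma prop_core:
  assumes "b21 = (\<not> b01)"
    and "b31 = (\<not> b02)"
    and "b23 = (\<not> b12)"
    and "b41 = (\<not> b11)"
    and "b60 = (\<not> b20)"
    and "b50 = (\<not> b32)"
    and "b70 = (\<not> b30)"
    and "b51 = (\<not> b42)"
    and "b80 = (\<not> b40)"
    and "b90 = (\<not> b52)"
    and "((b00 \<and> \<not> b01 \<and> \<not> b02) \<or> (\<not> b00 \<and> b01 \<and> \<not> b02) \<or> (\<not> b00 \<and> \<not> b01 \<and> b02))"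
    and "((b10 \<and> \<not> b11 \<and> \<not> b12) \<or> (\<not> b10 \<and> b11 \<and> \<not> b12) \<or> (\<not> b10 \<and> \<not> b11 \<and> b12))"
    and "((b20 \<and> \<not> b21 \<and> \<not> b22 \<and> \<not> b23) \<or> (\<not> b20 \<and> b21 \<and> b22 \<and> b23))"
    and "((b30 \<and> \<not> b31 \<and> \<not> b32) \<or> (\<not> b30 \<and> b31 \<and> b32))"
    and "((b40 \<and> \<not> b41 \<and> \<not> b42) \<or> (\<not> b40 \<and> b41 \<and> b42))"
    and "((b50 \<and> \<not> b51 \<and> \<not> b52) \<or> (\<not> b50 \<and> b51 \<and> \<not> b52) \<or> (\<not> b50 \<and> \<not> b51 \<and> b52))"
  shows "(b01 = (\<not>b00 \<and> \<not>b10)) \<and>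
    (b02 = (\<not>b00 \<and> b10)) \<and>
    (b11 = (b00 \<and> \<not>b10)) \<and>
    (b12 = (\<not>b00 \<and> \<not>b10)) \<and>
    (b20 = (\<not>b00 \<and> \<not>b10)) \<and>
    (b21 = (b00 \<or> b10)) \<and>
    (b22 = (b00 \<or> b10)) \<and>
    (b23 = (b00 \<or> b10)) \<and>
    (b30 = (\<not>b00 \<and> b10)) \<and>
    (b31 = (b00 \<or> \<not>b10)) \<and>
    (b32 = (b00 \<or> \<not>b10)) \<and>
    (b40 = (b00 \<and> \<not>b10)) \<and>
    (b41 = (\<not>b00 \<or> b10)) \<and>
    (b42 = (\<not>b00 \<or> b10)) \<and>
    (b50 = (\<not>b00 \<and> b10)) \<and>
    (b51 = (b00 \<and> \<not>b10)) \<and>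
    (b52 = ((b00 \<and> b10) \<or> (\<not>b00 \<and> \<not>b10))) \<and>
    (b60 = (b00 \<or> b10)) \<and>
    (b70 = (b00 \<or> \<not>b10)) \<and>
    (b80 = (\<not>b00 \<or> b10)) \<and>
    (b90 = ((b00 \<and> \<not>b10) \<or> (\<not>b00 \<and> b10)))"
proof -
  have s: "b21 = (\<not> b01)" "b31 = (\<not> b02)" "b23 = (\<not> b12)" "b41 = (\<not> b11)" "b60 = (\<not> b20)"
    "b50 = (\<not> b32)" "b70 = (\<not> b30)" "b51 = (\<not> b42)" "b80 = (\<not> b40)" "b90 = (\<not> b52)"
    using assms by simp_all
  have t0: "((b00 \<and> \<not> b01 \<and> \<not> b02) \<or> (\<not> b00 \<and> b01 \<and> \<not> b02) \<or> (\<not> b00 \<and> \<not> b01 \<and> b02))" using assms by simp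
  have t1: "((b10 \<and> \<not> b11 \<and> \<not> b12) \<or> (\<not> b10 \<and> b11 \<and> \<not> b12) \<or> (\<not> b10 \<and> \<not> b11 \<and> b12))" using assms by simp
  have g2: "b20 = b01 \<and> b12 = b01 \<and> b22 = (\<not> b01)" using assms(13) s by auto
  have g3: "b30 = b02 \<and> b32 = (\<not> b02)" using assms(14) s by auto
  have g4: "b40 = b11 \<and> b42 = (\<not> b11)" using assms(15) s by auto
  have t5: "((b02 \<and> \<not> b11 \<and> \<not> b52) \<or> (\<not> b02 \<and> b11 \<and> \<not> b52) \<or> (\<not> b02 \<and> \<not> b11 \<and> b52))" using assms(16) s g3 g4 by simp
  have core: "b01 = (\<not>b00 \<and> \<not>b10) \<and> b02 = (\<not>b00 \<and> b10) \<and> b11 = (b00 \<and> \<not>b10) \<and> b52 = ((b00 \<and> b10) \<or> (\<not>b00 \<and> \<not>b10))"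
    using t0 t1 t5 g2 by (cases b00; cases b10; auto)
  show ?thesis using s g2 g3 g4 core by auto
qed

lemma prop_core2: "(b21 = (\<not> b01)) \<and>
    (b31 = (\<not> b02)) \<and>
    (b23 = (\<not> b12)) \<and>
    (b41 = (\<not> b11)) \<and>
    (b60 = (\<not> b20)) \<and>
    (b50 = (\<not> b32)) \<and>
    (b70 = (\<not> b30)) \<and>
    (b51 = (\<not> b42)) \<and>
    (b80 = (\<not> b40)) \<and>
    (b90 = (\<not> b52)) \<and>
    (((b00 \<and> \<not> b01 \<and> \<not> b02) \<or> (\<not> b00 \<and> b01 \<and> \<not> b02) \<or> (\<not> b00 \<and> \<not> b01 \<and> b02))) \<and>
    (((b10 \<and> \<not> b11 \<and> \<not> b12) \<or> (\<not> b10 \<and> b11 \<and> \<not> b12) \<or> (\<not> b10 \<and> \<not> b11 \<and> b12))) \<and>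
    (((b20 \<and> \<not> b21 \<and> \<not> b22 \<and> \<not> b23) \<or> (\<not> b20 \<and> b21 \<and> b22 \<and> b23))) \<and>
    (((b30 \<and> \<not> b31 \<and> \<not> b32) \<or> (\<not> b30 \<and> b31 \<and> b32))) \<and>
    (((b40 \<and> \<not> b41 \<and> \<not> b42) \<or> (\<not> b40 \<and> b41 \<and> b42))) \<and>
    (((b50 \<and> \<not> b51 \<and> \<not> b52) \<or> (\<not> b50 \<and> b51 \<and> \<not> b52) \<or> (\<not> b50 \<and> \<not> b51 \<and> b52)))
   \<Longrightarrow> (b01 = (\<not>b00 \<and> \<not>b10)) \<and>
    (b02 = (\<not>b00 \<and> b10)) \<and>
    (b11 = (b00 \<and> \<not>b10)) \<and>
    (b12 = (\<not>b00 \<and> \<not>b10)) \<and>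
    (b20 = (\<not>b00 \<and> \<not>b10)) \<and>
    (b21 = (b00 \<or> b10)) \<and>
    (b22 = (b00 \<or> b10)) \<and>
    (b23 = (b00 \<or> b10)) \<and>
    (b30 = (\<not>b00 \<and> b10)) \<and>
    (b31 = (b00 \<or> \<not>b10)) \<and>
    (b32 = (b00 \<or> \<not>b10)) \<and>
    (b40 = (b00 \<and> \<not>b10)) \<and>
    (b41 = (\<not>b00 \<or> b10)) \<and>
    (b42 = (\<not>b00 \<or> b10)) \<and>
    (b50 = (\<not>b00 \<and> b10)) \<and>
    (b51 = (b00 \<and> \<not>b10)) \<and>
    (b52 = ((b00 \<and> b10) \<or> (\<not>b00 \<and> \<not>b10))) \<and>
    (b60 = (b00 \<or> b10)) \<and>
    (b70 = (b00 \<or> \<not>b10)) \<and>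
    (b80 = (\<not>b00 \<or> b10)) \<and>
    (b90 = ((b00 \<and> \<not>b10) \<or> (\<not>b00 \<and> b10)))"
  by (elim conjE, rule prop_core, assumption+)

lemma good_only: assumes "good_assignment V0 lab0 m0 a" shows "\<forall>h\<in>H0. a h = F (a (0,0)) (a (1,0)) h"
proof -
  have G1: "\<forall>h\<in>H0. m0 h \<noteq> h \<longrightarrow> a (m0 h) \<noteq> a h"
    and G2: "\<forall>v\<in>V0. {i. i < fst (lab0 v) \<and> a (v, i)} \<in> snd (lab0 v)"
    using assms unfolding good_assignment_def H0_eq by auto
  have e0: "a (2, 1) = (\<not> a (0, 1))" using bspec[OF G1, of "(0, 1)"] by (simp add: H0_def)
  have e1: "a (3, 1) = (\<not> a (0, 2))" using bspec[OF G1, of "(0, 2)"] by (simp add: H0_def)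
  have e2: "a (2, 3) = (\<not> a (1, 2))" using bspec[OF G1, of "(1, 2)"] by (simp add: H0_def)
  have e3: "a (4, 1) = (\<not> a (1, 1))" using bspec[OF G1, of "(1, 1)"] by (simp add: H0_def)
  have e4: "a (6, 0) = (\<not> a (2, 0))" using bspec[OF G1, of "(2, 0)"] by (simp add: H0_def)
  have e5: "a (5, 0) = (\<not> a (3, 2))" using bspec[OF G1, of "(3, 2)"] by (simp add: H0_def)
  have e6: "a (7, 0) = (\<not> a (3, 0))" using bspec[OF G1, of "(3, 0)"] by (simp add: H0_def)
  have e7: "a (5, 1) = (\<not> a (4, 2))" using bspec[OF G1, of "(4, 2)"] by (simp add: H0_def)
  have e8: "a (8, 0) = (\<not> a (4, 0))" using bspec[OF G1, of "(4, 0)"] by (simp add: H0_def)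
  have e9: "a (9, 0) = (\<not> a (5, 2))" using bspec[OF G1, of "(5, 2)"] by (simp add: H0_def)
  have v0: "((a (0, 0) \<and> \<not> a (0, 1) \<and> \<not> a (0, 2)) \<or> (\<not> a (0, 0) \<and> a (0, 1) \<and> \<not> a (0, 2)) \<or> (\<not> a (0, 0) \<and> \<not> a (0, 1) \<and> a (0, 2)))" using bspec[OF G2, of 0] by (simp add: V0_def)
  have v1: "((a (1, 0) \<and> \<not> a (1, 1) \<and> \<not> a (1, 2)) \<or> (\<not> a (1, 0) \<and> a (1, 1) \<and> \<not> a (1, 2)) \<or> (\<not> a (1, 0) \<and> \<not> a (1, 1) \<and> a (1, 2)))" using bspec[OF G2, of 1] by (simp add: V0_def)
  have v2: "((a (2, 0) \<and> \<not> a (2, 1) \<and> \<not> a (2, 2) \<and> \<not> a (2, 3)) \<or> (\<not> a (2, 0) \<and> a (2, 1) \<and> a (2, 2) \<and> a (2, 3)))" using bspec[OF G2, of 2] by (simp add: V0_def)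
  have v3: "((a (3, 0) \<and> \<not> a (3, 1) \<and> \<not> a (3, 2)) \<or> (\<not> a (3, 0) \<and> a (3, 1) \<and> a (3, 2)))" using bspec[OF G2, of 3] by (simp add: V0_def)
  have v4: "((a (4, 0) \<and> \<not> a (4, 1) \<and> \<not> a (4, 2)) \<or> (\<not> a (4, 0) \<and> a (4, 1) \<and> a (4, 2)))" using bspec[OF G2, of 4] by (simp add: V0_def)
  have v5: "((a (5, 0) \<and> \<not> a (5, 1) \<and> \<not> a (5, 2)) \<or> (\<not> a (5, 0) \<and> a (5, 1) \<and> \<not> a (5, 2)) \<or> (\<not> a (5, 0) \<and> \<not> a (5, 1) \<and> a (5, 2)))" using bspec[OF G2, of 5] by (simp add: V0_def)
  have C: "(a (0, 1) = (\<not>a (0, 0) \<and> \<not>a (1, 0))) \<and>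
    (a (0, 2) = (\<not>a (0, 0) \<and> a (1, 0))) \<and>
    (a (1, 1) = (a (0, 0) \<and> \<not>a (1, 0))) \<and>
    (a (1, 2) = (\<not>a (0, 0) \<and> \<not>a (1, 0))) \<and>
    (a (2, 0) = (\<not>a (0, 0) \<and> \<not>a (1, 0))) \<and>
    (a (2, 1) = (a (0, 0) \<or> a (1, 0))) \<and>
    (a (2, 2) = (a (0, 0) \<or> a (1, 0))) \<and>
    (a (2, 3) = (a (0, 0) \<or> a (1, 0))) \<and>
    (a (3, 0) = (\<not>a (0, 0) \<and> a (1, 0))) \<and>
    (a (3, 1) = (a (0, 0) \<or> \<not>a (1, 0))) \<and>
    (a (3, 2) = (a (0, 0) \<or> \<not>a (1, 0))) \<and>
    (a (4, 0) = (a (0, 0) \<and> \<not>a (1, 0))) \<and>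
    (a (4, 1) = (\<not>a (0, 0) \<or> a (1, 0))) \<and>
    (a (4, 2) = (\<not>a (0, 0) \<or> a (1, 0))) \<and>
    (a (5, 0) = (\<not>a (0, 0) \<and> a (1, 0))) \<and>
    (a (5, 1) = (a (0, 0) \<and> \<not>a (1, 0))) \<and>
    (a (5, 2) = ((a (0, 0) \<and> a (1, 0)) \<or> (\<not>a (0, 0) \<and> \<not>a (1, 0)))) \<and>
    (a (6, 0) = (a (0, 0) \<or> a (1, 0))) \<and>
    (a (7, 0) = (a (0, 0) \<or> \<not>a (1, 0))) \<and>
    (a (8, 0) = (\<not>a (0, 0) \<or> a (1, 0))) \<and>
    (a (9, 0) = ((a (0, 0) \<and> \<not>a (1, 0)) \<or> (\<not>a (0, 0) \<and> a (1, 0))))" by (rule prop_core[OF e0 e1 e2 e3 e4 e5 e6 e7 e8 e9 v0 v1 v2 v3 v4 v5])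
  show ?thesis unfolding H0_def using C by (simp add: F_def)
qed

lemma good_if: assumes R: "\<forall>h\<in>H0. a h = F (a (0,0)) (a (1,0)) h" shows "good_assignment V0 lab0 m0 a"
proof -
  have C: "(a (0, 1) = (\<not>a (0, 0) \<and> \<not>a (1, 0))) \<and>
    (a (0, 2) = (\<not>a (0, 0) \<and> a (1, 0))) \<and>
    (a (1, 1) = (a (0, 0) \<and> \<not>a (1, 0))) \<and>
    (a (1, 2) = (\<not>a (0, 0) \<and> \<not>a (1, 0))) \<and>
    (a (2, 0) = (\<not>a (0, 0) \<and> \<not>a (1, 0))) \<and>
    (a (2, 1) = (a (0, 0) \<or> a (1, 0))) \<and>
    (a (2, 2) = (a (0, 0) \<or> a (1, 0))) \<and>
    (a (2, 3) = (a (0, 0) \<or> a (1, 0))) \<and>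
    (a (3, 0) = (\<not>a (0, 0) \<and> a (1, 0))) \<and>
    (a (3, 1) = (a (0, 0) \<or> \<not>a (1, 0))) \<and>
    (a (3, 2) = (a (0, 0) \<or> \<not>a (1, 0))) \<and>
    (a (4, 0) = (a (0, 0) \<and> \<not>a (1, 0))) \<and>
    (a (4, 1) = (\<not>a (0, 0) \<or> a (1, 0))) \<and>
    (a (4, 2) = (\<not>a (0, 0) \<or> a (1, 0))) \<and>
    (a (5, 0) = (\<not>a (0, 0) \<and> a (1, 0))) \<and>
    (a (5, 1) = (a (0, 0) \<and> \<not>a (1, 0))) \<and>
    (a (5, 2) = ((a (0, 0) \<and> a (1, 0)) \<or> (\<not>a (0, 0) \<and> \<not>a (1, 0)))) \<and>
    (a (6, 0) = (a (0, 0) \<or> a (1, 0))) \<and>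
    (a (7, 0) = (a (0, 0) \<or> \<not>a (1, 0))) \<and>
    (a (8, 0) = (\<not>a (0, 0) \<or> a (1, 0))) \<and>
    (a (9, 0) = ((a (0, 0) \<and> \<not>a (1, 0)) \<or> (\<not>a (0, 0) \<and> a (1, 0))))" using R unfolding H0_def by (simp add: F_def)
  show ?thesis unfolding good_assignment_def H0_eq
  proof (intro conjI)
    show "\<forall>h\<in>H0. m0 h \<noteq> h \<longrightarrow> a (m0 h) \<noteq> a h"
      unfolding H0_def using C by (cases "a (0,0)"; cases "a (1,0)"; simp)
    show "\<forall>v\<in>V0. {i. i < fst (lab0 v) \<and> a (v, i)} \<in> snd (lab0 v)"
      unfolding V0_def using C by (cases "a (0,0)"; cases "a (1,0)"; simp)
  qed
qed

lemma good_iff: "good_assignment V0 lab0 m0 a \<longleftrightarrow> (\<forall>h\<in>H0. a h = F (a (0,0)) (a (1,0)) h)"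
  using good_only good_if by blast

lemma F_good: "good_assignment V0 lab0 m0 (F x y)"
  by (rule good_if) (simp add: F_def)

lemma sel3: "{h \<in> {p, q, r}. P h} = (if P p then {p} else {}) \<union> (if P q then {q} else {}) \<union> (if P r then {r} else {})"
  by auto

lemma F_22: "good_assignment V0 lab0 m0 a \<Longrightarrow> a (2,2) = (a (0,0) \<or> a (1,0))"
  using good_only[of a] unfolding H0_def by (simp add: F_def)

lemma sc_eq: "sim_constraint V0 lab0 m0 = {{}, {(0,0),(2,2)}, {(1,0),(2,2)}, {(0,0),(1,0),(2,2)}}"
proof (rule set_eqI)
  fix D
  show "D \<in> sim_constraint V0 lab0 m0 \<longleftrightarrow> D \<in> {{}, {(0,0),(2,2)}, {(1,0),(2,2)}, {(0,0),(1,0),(2,2)}}"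
  proof
    assume "D \<in> sim_constraint V0 lab0 m0"
    then obtain a where g: "good_assignment V0 lab0 m0 a" and r: "D = {h \<in> {(0,0),(1,0),(2,2)}. a h}"
      unfolding sim_constraint_def realizes_def dang_eq by blast
    have c: "a (2,2) = (a (0,0) \<or> a (1,0))" by (rule F_22[OF g])
    show "D \<in> {{}, {(0,0),(2,2)}, {(1,0),(2,2)}, {(0,0),(1,0),(2,2)}}"
      unfolding r sel3 using c by (cases "a (0,0)"; cases "a (1,0)"; simp add: insert_commute)
  next
    have real: "realizes V0 lab0 m0 (F x y) {h \<in> {(0,0),(1,0),(2,2)}. F x y h}" for x y
      unfolding realizes_def dang_eq ..
    have mem: "{h \<in> {(0,0),(1,0),(2,2)}. F x y h} \<in> sim_constraint V0 lab0 m0" for x y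
      unfolding sim_constraint_def using F_good real by blast
    assume "D \<in> {{}, {(0,0),(2,2)}, {(1,0),(2,2)}, {(0,0),(1,0),(2,2)}}"
    then consider "D = {}" | "D = {(0,0),(2,2)}" | "D = {(1,0),(2,2)}" | "D = {(0,0),(1,0),(2,2)}"
      by blast
    then show "D \<in> sim_constraint V0 lab0 m0"
    proof cases
      case 1 then show ?thesis using mem[of False False] unfolding sel3 by (simp add: F_def insert_commute)
    next
      case 2 then show ?thesis using mem[of True False] unfolding sel3 by (simp add: F_def insert_commute)
    next
      case 3 then show ?thesis using mem[of False True] unfolding sel3 by (simp add: F_def insert_commute)
    next
      case 4 then show ?thesis using mem[of True True] unfolding sel3 by (simp add: F_def insert_commute)
    qed
  qed
qed

lemma pars: "parsimonious V0 lab0 m0"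
  unfolding parsimonious_def
proof (intro ballI allI impI)
  fix D a b
  assume A: "good_assignment V0 lab0 m0 a \<and> realizes V0 lab0 m0 a D \<and>
             good_assignment V0 lab0 m0 b \<and> realizes V0 lab0 m0 b D"
  then have ga: "\<forall>h\<in>H0. a h = F (a (0,0)) (a (1,0)) h" and gb: "\<forall>h\<in>H0. b h = F (b (0,0)) (b (1,0)) h"
    using good_only by blast+
  from A have ra: "D = {h \<in> {(0,0),(1,0),(2,2)}. a h}" and rb: "D = {h \<in> {(0,0),(1,0),(2,2)}. b h}"
    unfolding realizes_def dang_eq by blast+
  have e0: "a (0,0) = b (0,0)"
  proof -
    have "a (0,0) \<longleftrightarrow> (0,0) \<in> D" using ra by blast
    also have "\<dots> \<longleftrightarrow> b (0,0)" using rb by blast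
    finally show ?thesis .
  qed
  have e1: "a (1,0) = b (1,0)"
  proof -
    have "a (1,0) \<longleftrightarrow> (1,0) \<in> D" using ra by blast
    also have "\<dots> \<longleftrightarrow> b (1,0)" using rb by blast
    finally show ?thesis .
  qed
  fix h assume "h \<in> halfedges V0 lab0"
  then have "h \<in> H0" by (simp add: H0_eq)
  then show "a h = b h" using ga gb e0 e1 by simp
qed

lemma rho_reach: "\<forall>h\<in>{(0::nat,0::nat),(1,0),(2,2)}. \<forall>h'\<in>{(0,0),(1,0),(2,2)}.
   (rho0 ^^ 0) h = h' \<or> (rho0 ^^ Suc 0) h = h' \<or> (rho0 ^^ Suc (Suc 0)) h = h'"
  by simp

theorem mainTheorem13:
  shows "planar_parsimoniously_simulates
           ({one_in_three, free_terminal} \<union> {fanout k | k. k \<ge> 1}) nor_gate"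
  unfolding planar_parsimoniously_simulates_def
proof (intro exI conjI)
  show "wf_sim V0 lab0 m0"
    unfolding wf_sim_def H0_eq by (simp add: V0_def H0_def)
  show "\<forall>v\<in>V0. lab0 v \<in> {one_in_three, free_terminal} \<union> {fanout k | k. k \<ge> 1}"
    by (auto simp: V0_def)
  show "planar_sim V0 lab0 m0 rho0"
    unfolding planar_sim_def outside_rotation_def dang_eq
  proof (intro conjI)
    show "bij_betw rho0 {(0,0),(1,0),(2,2)} {(0,0),(1,0),(2,2)}"
      by (auto simp: bij_betw_def inj_on_def)
    show "\<forall>h\<in>{(0,0),(1,0),(2,2)}. \<forall>h'\<in>{(0,0),(1,0),(2,2)}. \<exists>k. (rho0 ^^ k) h = h'"
      using rho_reach by blast
    show "planar_map (sim_darts V0 lab0 m0) (sim_rot lab0 rho0) (sim_edge m0)" by (rule planar0)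
  qed
  show "parsimonious V0 lab0 m0" by (rule pars)
  have fn: "fst nor_gate = 3" by (simp add: nor_gate_def)
  have r3: "{0..<3::nat} = {0,1,2}" by auto
  show "bij_betw p0 (dangling V0 lab0 m0) {0..<fst nor_gate}"
    unfolding fn r3 dang_eq by (auto simp: bij_betw_def inj_on_def p0_def)
  show "\<forall>h\<in>dangling V0 lab0 m0. p0 h = Suc (p0 (rho0 h)) mod fst nor_gate"
    unfolding fn dang_eq by (simp add: p0_def)
  show "(\<lambda>D. p0 ` D) ` sim_constraint V0 lab0 m0 = snd nor_gate"
    unfolding sc_eq by (simp add: p0_def nor_gate_def insert_commute)
qed

end
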